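(* Let $N>0$, $m>0$, $F>0$, $\alpha>0$, $w>0$ be fixed with $Nm>\alpha$, and for $g\geq 0$, $\tau\in(0,1)$, $L_g\geq 0$ define \[ L=\frac{N\left[(1-\tau)(mL_g+\alpha F)+(mg+F)mN\right]}{\alpha+(Nm-\alpha)\tau},\qquad q=\frac{(1-\tau)(L+L_g-\alpha g)}{\left(Nm+\alpha(1-\tau)\right)(L+L_g)}, \] \[ p=\frac{L+L_g}{L+L_g-\alpha g}\left(mw+\frac{\alpha(1-\tau)w}{N}\right),\qquad \Pi=\left((L+L_g)q+g\right)(p-mw)-Fw, \] regarded as functions of $(g,\tau,L_g)$, and let \[ \Lambda=(1-Nmq)\left(\frac{Nm}{1-\tau}+2\alpha\right)g-N(mg+F). \] Then at any point $(g,\tau,L_g)$: $\frac{\partial \Pi}{\partial L_g}<0$ if $L_g<\Lambda$; $\frac{\partial \Pi}{\partial L_g}=0$ if $L_g=\Lambda$; and $\frac{\partial \Pi}{\partial L_g}>0$ if $L_g>\Lambda$.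
   Context: These are the symmetric-equilibrium private employment $L$, per-capita consumption $q$ of each variety, price $p$, and profit $\Pi$ of each firm in a monopolistic-competition general equilibrium model with a measure $N$ of firms, marginal and fixed labor inputs $m$ and $F$, CARA utility parameter $\alpha$, nominal wage $w$, income tax rate $\tau$, government purchase $g$ of each variety, and government employment $L_g$. Here $\Lambda$ is evaluated at the same point (with $q$ the equilibrium value there). Partial derivatives are taken in $(g,\tau,L_g)$ with other parameters fixed. *)

theory Defs
  imports Complex_Main
begin

definition empL :: "real \<Rightarrow> real \<Rightarrow> real \<Rightarrow> real \<Rightarrow> real \<Rightarrow> real \<Rightarrow> real \<Rightarrow> real" where
  "empL N m F \<alpha> g \<tau> Lg =
     N * ((1 - \<tau>) * (m * Lg + \<alpha> * F) + (m * g + F) * m * N) / (\<alpha> + (N * m - \<alpha>) * \<tau>)"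

definition qty :: "real \<Rightarrow> real \<Rightarrow> real \<Rightarrow> real \<Rightarrow> real \<Rightarrow> real \<Rightarrow> real \<Rightarrow> real" where
  "qty N m F \<alpha> g \<tau> Lg =
     (let L = empL N m F \<alpha> g \<tau> Lg in
      (1 - \<tau>) * (L + Lg - \<alpha> * g) / ((N * m + \<alpha> * (1 - \<tau>)) * (L + Lg)))"

definition price :: "real \<Rightarrow> real \<Rightarrow> real \<Rightarrow> real \<Rightarrow> real \<Rightarrow> real \<Rightarrow> real \<Rightarrow> real \<Rightarrow> real" where
  "price N m F \<alpha> w g \<tau> Lg =
     (let L = empL N m F \<alpha> g \<tau> Lg in
      (L + Lg) / (L + Lg - \<alpha> * g) * (m * w + \<alpha> * (1 - \<tau>) * w / N))"

definition profit :: "real \<Rightarrow> real \<Rightarrow> real \<Rightarrow> real \<Rightarrow> real \<Rightarrow> real \<Rightarrow> real \<Rightarrow> real \<Rightarrow> real" where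
  "profit N m F \<alpha> w g \<tau> Lg =
     (let L = empL N m F \<alpha> g \<tau> Lg in
      ((L + Lg) * qty N m F \<alpha> g \<tau> Lg + g) * (price N m F \<alpha> w g \<tau> Lg - m * w) - F * w)"

definition Lambda :: "real \<Rightarrow> real \<Rightarrow> real \<Rightarrow> real \<Rightarrow> real \<Rightarrow> real \<Rightarrow> real \<Rightarrow> real" where
  "Lambda N m F \<alpha> g \<tau> Lg =
     (1 - N * m * qty N m F \<alpha> g \<tau> Lg) * (N * m / (1 - \<tau>) + 2 * \<alpha>) * g - N * (m * g + F)"

end

theory Submission
  imports Defs
begin

lemma alg:
  fixes S a K N m w \<alpha> g F :: real
  assumes "S - \<alpha>*g \<noteq> 0" "S \<noteq> 0" "K \<noteq> 0" "N \<noteq> 0" "K = N*m+\<alpha>*a"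
  shows "(S * (a*(S-\<alpha>*g)/(K*S)) + g) * (S/(S-\<alpha>*g)*(m*w+\<alpha>*a*w/N) - m*w) - F*w
       = w*\<alpha>/(K*N)*(a*(S-\<alpha>*g)+K*g)^2/(S-\<alpha>*g) - F*w"
proof -
  have 1: "S * (a*(S-\<alpha>*g)/(K*S)) + g = (a*(S-\<alpha>*g)+K*g)/K"
    using assms(2,3) by (simp add: field_simps)
  have 2: "S/(S-\<alpha>*g)*(m*w+\<alpha>*a*w/N) - m*w = w*\<alpha>*(a*(S-\<alpha>*g)+K*g)/(N*(S-\<alpha>*g))"
    using assms(1,4) unfolding assms(5) by (simp add: field_simps)
  show ?thesis unfolding 1 2 using assms(1,3,4) by (simp add: field_simps power2_eq_square)
qed


theorem theorem5:
  fixes N m F \<alpha> w g \<tau> Lg :: real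
  assumes "N > 0" "m > 0" "F > 0" "\<alpha> > 0" "w > 0" "N * m > \<alpha>"
    and "g \<ge> 0" "0 < \<tau>" "\<tau> < 1" "Lg \<ge> 0"
  shows "\<exists>D. ((\<lambda>x. profit N m F \<alpha> w g \<tau> x) has_real_derivative D) (at Lg) \<and>
             (Lg < Lambda N m F \<alpha> g \<tau> Lg \<longrightarrow> D < 0) \<and>
             (Lg = Lambda N m F \<alpha> g \<tau> Lg \<longrightarrow> D = 0) \<and>
             (Lg > Lambda N m F \<alpha> g \<tau> Lg \<longrightarrow> D > 0)"
proof -
  define a where "a = 1 - \<tau>"
  define K where "K = N*m + \<alpha>*a"
  define den where "den = \<alpha> + (N * m - \<alpha>) * \<tau>"
  define X where "X = N*(m*g+F)"
  define C where "C = N*a*\<alpha>*F + N*m*X"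
  define M where "M = N*m + 2*\<alpha>*a"
  define u where "u x = N * ((1 - \<tau>) * (m * x + \<alpha> * F) + (m * g + F) * m * N) / (\<alpha> + (N * m - \<alpha>) * \<tau>) + x - \<alpha>*g" for x
  define c where "c = w*\<alpha>/(K*N)"
  define f where "f x = c*(a*u x+K*g)^2/u x - F*w" for x
  have a0: "a > 0" "a < 1" using assms a_def by auto
  have K0: "K > 0" using assms a0 K_def by (simp add: add_pos_pos)
  have den0: "den > 0" using assms den_def
    by (smt (verit, ccfv_SIG) mult_pos_pos)
  have denlt: "den < N*m" unfolding den_def using assms
    by (smt (verit, best) mult_less_cancel_left_pos mult.commute mult_cancel_right1)
  have Sform: "empL N m F \<alpha> g \<tau> x + x = (K*x + C)/den" for x
    unfolding empL_def K_def C_def X_def a_def den_def using den0[unfolded den_def]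
    by (simp add: field_simps)
  have uS: "u x = empL N m F \<alpha> g \<tau> x + x - \<alpha>*g" for x
    unfolding u_def empL_def by simp
  define x0 where "x0 = (\<alpha>*g*den - C)/K"
  have upos: "u x > 0" if "x > x0" for x
  proof -
    have "K*x + C > \<alpha>*g*den" using that K0 unfolding x0_def by (simp add: field_simps)
    hence "(K*x + C)/den > \<alpha>*g" using den0 by (simp add: field_simps)
    thus ?thesis using Sform[of x] uS[of x] by simp
  qed
  have x0lt: "x0 < Lg"
  proof -
    have "\<alpha>*g*den \<le> N*m*g*den" using assms den0 by (simp add: mult_right_mono)
    also have "\<dots> \<le> N*m*g*N*m"
      using denlt assms by (simp add: mult_left_mono)
    also have "\<dots> < C" unfolding C_def X_def using assms a0
      by (simp add: algebra_simps add_pos_pos mult_pos_pos)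
    finally have "\<alpha>*g*den - C < 0" by simp
    hence "x0 < 0" unfolding x0_def using K0 by (simp add: divide_neg_pos)
    thus ?thesis using assms by simp
  qed
  have feq: "profit N m F \<alpha> w g \<tau> x = f x" if "x > x0" for x
  proof -
    have u0: "u x > 0" using upos that by simp
    define S where "S = empL N m F \<alpha> g \<tau> x + x"
    have S0: "S > 0" using u0 uS[of x] assms S_def
      by (smt (verit) mult_nonneg_nonneg)
    have uu: "u x = S - \<alpha>*g" using uS S_def by simp
    have "profit N m F \<alpha> w g \<tau> x = (S * (a*(S-\<alpha>*g)/(K*S)) + g) * (S/(S-\<alpha>*g)*(m*w+\<alpha>*a*w/N) - m*w) - F*w"
      unfolding profit_def qty_def price_def Let_def S_def a_def K_def by simp
    also have "\<dots> = w*\<alpha>/(K*N)*(a*(S-\<alpha>*g)+K*g)^2/(S-\<alpha>*g) - F*w"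
      by (rule alg) (use u0 uu S0 K0 assms K_def in auto)
    finally show ?thesis unfolding f_def c_def uu by simp
  qed
  define U where "U = u Lg"
  have U0: "U > 0" using upos x0lt U_def by simp
  define D where "D = c*(a*U+K*g)*(a*U-K*g)/U^2*(K/den)"
  have du: "(u has_real_derivative K/den) (at Lg)"
  proof -
    have "(u has_real_derivative N * ((1 - \<tau>) * (m * 1)) / (\<alpha> + (N * m - \<alpha>) * \<tau>) + 1) (at Lg)"
      unfolding u_def using den0 den_def by (auto intro!: derivative_eq_intros)
    moreover have "N * ((1 - \<tau>) * (m * 1)) / (\<alpha> + (N * m - \<alpha>) * \<tau>) + 1 = K/den"
      using den0 unfolding K_def den_def a_def by (simp add: field_simps)
    ultimately show ?thesis by simp
  qed
  have df: "(f has_real_derivative D) (at Lg)"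
  proof -
    have "(f has_real_derivative c*((2*(a*U+K*g)*(a*(K/den)))*U - (a*U+K*g)^2*(K/den))/(U*U)) (at Lg)"
      unfolding f_def U_def using U0[unfolded U_def]
      by (auto intro!: derivative_eq_intros du simp: algebra_simps diff_divide_distrib)
    moreover have "c*((2*(a*U+K*g)*(a*(K/den)))*U - (a*U+K*g)^2*(K/den))/(U*U) = D"
      unfolding D_def using U0 den0 by (simp add: field_simps power2_eq_square)
    ultimately show ?thesis by simp
  qed
  have dp: "((\<lambda>x. profit N m F \<alpha> w g \<tau> x) has_real_derivative D) (at Lg)"
  proof (rule has_field_derivative_transform_within_open[OF df, of "{x0<..}"])
    show "open {x0<..}" by simp
    show "Lg \<in> {x0<..}" using x0lt by simp
    show "\<And>x. x \<in> {x0<..} \<Longrightarrow> f x = profit N m F \<alpha> w g \<tau> x" using feq by simp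
  qed
  define S where "S = empL N m F \<alpha> g \<tau> Lg + Lg"
  have SU: "U = S - \<alpha>*g" unfolding U_def S_def uS by simp
  have Sden: "S*den = K*Lg + C" unfolding S_def Sform using den0 by simp
  have S0: "S > 0" using U0 SU assms by (smt (verit) mult_nonneg_nonneg)
  have X0: "Lg + X > 0" unfolding X_def using assms
    by (smt (verit) mult_nonneg_nonneg mult_pos_pos)
  have q: "qty N m F \<alpha> g \<tau> Lg = a*(S-\<alpha>*g)/(K*S)"
    unfolding qty_def Let_def S_def a_def K_def by simp
  have key: "K*S - N*m*(a*(S-\<alpha>*g)) = K*(Lg+X)"
  proof -
    have "K*S - N*m*(a*(S-\<alpha>*g)) = S*den + N*m*a*\<alpha>*g"
      unfolding K_def den_def a_def by (simp add: algebra_simps)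
    also have "\<dots> = K*(Lg+X)" unfolding Sden K_def C_def X_def by (simp add: algebra_simps)
    finally show ?thesis .
  qed
  have onem: "1 - N*m*qty N m F \<alpha> g \<tau> Lg = (Lg+X)/S"
  proof -
    have "1 - N*m*qty N m F \<alpha> g \<tau> Lg = (K*S - N*m*(a*(S-\<alpha>*g)))/(K*S)"
      unfolding q using K0 S0 by (simp add: field_simps)
    also have "\<dots> = (Lg+X)/S" unfolding key using K0 S0 by simp
    finally show ?thesis .
  qed
  have Lam: "Lambda N m F \<alpha> g \<tau> Lg = (Lg+X)/S * (M/a) * g - X"
  proof -
    have "N*m/(1-\<tau>) + 2*\<alpha> = M/a" unfolding M_def a_def using a0 a_def by (simp add: field_simps)
    thus ?thesis unfolding Lambda_def onem X_def by simp
  qed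
  have diff: "Lg - Lambda N m F \<alpha> g \<tau> Lg = (Lg+X)*(a*S-M*g)/(a*S)"
    unfolding Lam using S0 a0 by (simp add: field_simps)
  have aU: "a*U - K*g = a*S - M*g" unfolding SU K_def M_def by (simp add: algebra_simps)
  have c0: "c > 0" unfolding c_def using assms K0 by simp
  have P: "c*(a*U+K*g)/U^2*(K/den) > 0" using c0 a0 U0 K0 den0 assms
    by (simp add: add_pos_nonneg)
  have Deq: "D = (c*(a*U+K*g)/U^2*(K/den)) * (a*S-M*g)" unfolding D_def aU[symmetric] by simp
  have sgn: "(Lg - Lambda N m F \<alpha> g \<tau> Lg > 0 \<longleftrightarrow> a*S-M*g > 0) \<and> (Lg - Lambda N m F \<alpha> g \<tau> Lg < 0 \<longleftrightarrow> a*S-M*g < 0) \<and> (Lg - Lambda N m F \<alpha> g \<tau> Lg = 0 \<longleftrightarrow> a*S-M*g = 0)"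
    unfolding diff using X0 S0 a0 by (auto simp: zero_less_divide_iff divide_less_0_iff zero_less_mult_iff mult_less_0_iff)
  have dsg: "(D > 0 \<longleftrightarrow> a*S-M*g > 0) \<and> (D < 0 \<longleftrightarrow> a*S-M*g < 0) \<and> (D = 0 \<longleftrightarrow> a*S-M*g = 0)"
  proof -
    define pp where "pp = c*(a*U+K*g)/U^2*(K/den)"
    have "pp > 0" "D = pp*(a*S-M*g)" using P Deq pp_def by auto
    thus ?thesis by (auto simp: zero_less_mult_iff mult_less_0_iff)
  qed
  show ?thesis
    apply (rule exI[of _ D])
    using dp sgn dsg by auto
qed

end
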